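(* Let $f:[-1,1]\to\mathbb{R}$ and $\epsilon_0>0$, and let $P:[-1,1]\to\mathbb{C}$ be a polynomial with $\max_{x\in[-1,1]}|f(x)-P(x)|\le\epsilon_0$. Let $\gamma:=\max_{x\in[-1,1]}|f(x)|$ and assume $\epsilon_0\le\gamma$. Let $\ket{\psi}=\sum_{j=1}^N\psi_j\ket{j}$ with $\psi_j\in\mathbb{R}$ and $\|\ket{\psi}\|_2=1$, and define $\mathcal{N}^2:=\sum_{j=1}^N|f(\psi_j)|^2>0$ and $\mathcal{N}_1^2:=\sum_{j=1}^N|P(\psi_j)|^2$. Then (i) $\max_{x\in[-1,1]}|P(x)|\le 2\gamma$; (ii) $|\mathcal{N}-\mathcal{N}_1|\le 3\gamma\epsilon_0N/\mathcal{N}$; (iii) if moreover $\epsilon_0\le\frac{\mathcal{N}^2}{6\gamma N}$, then $\mathcal{N}_1\ge\frac12\mathcal{N}$. *)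

theory Defs
  imports "HOL-Analysis.Analysis" "HOL-Computational_Algebra.Polynomial"
begin

end

theory Submission
  imports Defs
begin

theorem lemma12:
  fixes f :: "real \<Rightarrow> real" and \<epsilon>0 \<gamma> :: real and P :: "complex poly"
    and N :: nat and \<psi> :: "nat \<Rightarrow> real" and NN NN1 :: real
  assumes eps_pos: "\<epsilon>0 > 0"
    and approx: "\<forall>x\<in>{-1..1}. cmod (complex_of_real (f x) - poly P (complex_of_real x)) \<le> \<epsilon>0"
    and gamma_def: "\<gamma> = (SUP x\<in>{-1..1::real}. \<bar>f x\<bar>)"
    and eps_le: "\<epsilon>0 \<le> \<gamma>"
    and psi_norm: "(\<Sum>j=1..N. (\<psi> j)\<^sup>2) = 1"
    and NN_def: "NN = sqrt (\<Sum>j=1..N. \<bar>f (\<psi> j)\<bar>\<^sup>2)"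
    and NN_pos: "NN\<^sup>2 > 0"
    and NN1_def: "NN1 = sqrt (\<Sum>j=1..N. (cmod (poly P (complex_of_real (\<psi> j))))\<^sup>2)"
  shows "(\<forall>x\<in>{-1..1}. cmod (poly P (complex_of_real x)) \<le> 2 * \<gamma>)
     \<and> \<bar>NN - NN1\<bar> \<le> 3 * \<gamma> * \<epsilon>0 * real N / NN
     \<and> (\<epsilon>0 \<le> NN\<^sup>2 / (6 * \<gamma> * real N) \<longrightarrow> NN1 \<ge> NN / 2)"
proof -
  define p where "p x = cmod (poly P (complex_of_real x))" for x
  have cont: "continuous_on {-1..1::real} (\<lambda>x. poly P (complex_of_real x))"
    by (intro continuous_intros)
  have "compact ((\<lambda>x. poly P (complex_of_real x)) ` {-1..1::real})"
    by (rule compact_continuous_image[OF cont]) simp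
  then obtain B where B: "\<And>x. x \<in> {-1..1::real} \<Longrightarrow> p x \<le> B"
    unfolding p_def using compact_imp_bounded bounded_iff by (metis image_eqI)
  have diff: "\<bar>\<bar>f x\<bar> - p x\<bar> \<le> \<epsilon>0" if "x \<in> {-1..1}" for x
  proof -
    have "\<bar>cmod (complex_of_real (f x)) - p x\<bar> \<le> \<epsilon>0"
      unfolding p_def using norm_triangle_ineq3 approx that order_trans by blast
    then show ?thesis by simp
  qed
  have fb: "\<bar>f x\<bar> \<le> B + \<epsilon>0" if "x \<in> {-1..1}" for x
    using diff[OF that] B[OF that] by linarith
  have bdd: "bdd_above ((\<lambda>x. \<bar>f x\<bar>) ` {-1..1::real})"
    by (rule bdd_aboveI2[of _ _ "B + \<epsilon>0"]) (use fb in auto)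
  have fg: "\<bar>f x\<bar> \<le> \<gamma>" if "x \<in> {-1..1}" for x
    unfolding gamma_def using cSUP_upper[OF that bdd] .
  have pg: "p x \<le> 2 * \<gamma>" if "x \<in> {-1..1}" for x
    using diff[OF that] fg[OF that] eps_le by linarith
  have gpos: "\<gamma> > 0" using eps_pos eps_le by linarith
  have psi_in: "\<psi> j \<in> {-1..1}" if "j \<in> {1..N}" for j
  proof -
    have "(\<psi> j)\<^sup>2 \<le> (\<Sum>j=1..N. (\<psi> j)\<^sup>2)"
      by (rule member_le_sum) (use that in auto)
    then have "(\<psi> j)\<^sup>2 \<le> 1\<^sup>2" using psi_norm by simp
    then have "\<bar>\<psi> j\<bar> \<le> 1" by (metis abs_le_square_iff abs_one)
    then show ?thesis by auto
  qed
  define S where "S = (\<Sum>j=1..N. \<bar>f (\<psi> j)\<bar>\<^sup>2)"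
  define S1 where "S1 = (\<Sum>j=1..N. (p (\<psi> j))\<^sup>2)"
  have NN: "NN = sqrt S" using NN_def S_def by simp
  have NN1: "NN1 = sqrt S1" using NN1_def S1_def p_def by simp
  have tb: "\<bar>\<bar>f (\<psi> j)\<bar>\<^sup>2 - (p (\<psi> j))\<^sup>2\<bar> \<le> 3 * \<gamma> * \<epsilon>0" if "j \<in> {1..N}" for j
  proof -
    let ?a = "\<bar>f (\<psi> j)\<bar>" and ?b = "p (\<psi> j)"
    have b0: "?b \<ge> 0" unfolding p_def by simp
    have "\<bar>?a\<^sup>2 - ?b\<^sup>2\<bar> = \<bar>?a - ?b\<bar> * (?a + ?b)"
    proof -
      have "?a\<^sup>2 - ?b\<^sup>2 = (?a - ?b) * (?a + ?b)" by (simp add: power2_eq_square algebra_simps)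
      then show ?thesis using b0 by (simp only: abs_mult) simp
    qed
    also have "\<dots> \<le> \<epsilon>0 * (3 * \<gamma>)"
      apply (rule mult_mono)
      using diff[OF psi_in[OF that]] fg[OF psi_in[OF that]] pg[OF psi_in[OF that]] b0 eps_pos
      by auto
    finally show ?thesis by (simp add: mult_ac)
  qed
  have SS: "\<bar>S - S1\<bar> \<le> 3 * \<gamma> * \<epsilon>0 * real N"
  proof -
    have "\<bar>S - S1\<bar> = \<bar>\<Sum>j=1..N. \<bar>f (\<psi> j)\<bar>\<^sup>2 - (p (\<psi> j))\<^sup>2\<bar>"
      unfolding S_def S1_def by (simp add: sum_subtractf)
    also have "\<dots> \<le> (\<Sum>j=1..N. \<bar>\<bar>f (\<psi> j)\<bar>\<^sup>2 - (p (\<psi> j))\<^sup>2\<bar>)" by (rule sum_abs)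
    also have "\<dots> \<le> real (card {1..N}) * (3 * \<gamma> * \<epsilon>0)"
      by (rule sum_bounded_above) (use tb in auto)
    finally show ?thesis by (simp add: mult_ac)
  qed
  have S0: "S \<ge> 0" "S1 \<ge> 0" unfolding S_def S1_def by (auto intro: sum_nonneg)
  have NNp: "NN > 0" using NN_pos NN S0 by simp
  have NN10: "NN1 \<ge> 0" using NN1 S0 by simp
  have key: "\<bar>NN - NN1\<bar> * (NN + NN1) = \<bar>S - S1\<bar>"
  proof -
    have "(NN - NN1) * (NN + NN1) = NN\<^sup>2 - NN1\<^sup>2" by (simp add: power2_eq_square algebra_simps)
    also have "\<dots> = S - S1" using NN NN1 S0 by simp
    finally show ?thesis using NNp NN10 by (metis abs_mult abs_of_nonneg add_nonneg_nonneg less_imp_le)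
  qed
  have ii: "\<bar>NN - NN1\<bar> \<le> 3 * \<gamma> * \<epsilon>0 * real N / NN"
  proof -
    have "\<bar>NN - NN1\<bar> * NN \<le> \<bar>NN - NN1\<bar> * (NN + NN1)"
      using NN10 by (simp add: mult_left_mono)
    also have "\<dots> \<le> 3 * \<gamma> * \<epsilon>0 * real N" using key SS by simp
    finally show ?thesis using NNp by (simp add: pos_le_divide_eq)
  qed
  have iii: "NN1 \<ge> NN / 2" if h: "\<epsilon>0 \<le> NN\<^sup>2 / (6 * \<gamma> * real N)"
  proof -
    have Np: "real N > 0"
    proof (rule ccontr)
      assume "\<not> real N > 0" then have "N = 0" by simp
      then show False using NN_pos NN S_def by simp
    qed
    have "3 * \<gamma> * \<epsilon>0 * real N / NN \<le> 3 * \<gamma> * (NN\<^sup>2 / (6 * \<gamma> * real N)) * real N / NN"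
      using h gpos Np NNp by (intro divide_right_mono mult_right_mono mult_left_mono) auto
    also have "\<dots> = NN / 2" using gpos Np NNp by (simp add: field_simps power2_eq_square)
    finally show ?thesis using ii by linarith
  qed
  show ?thesis using pg ii iii unfolding p_def by blast
qed

end
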